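(* Let $\gamma>0$ and let $\mathbf a$ be given by $a_0=0$ and $a_i=i^{-\gamma}$ for $i\ge 1$. Then $f^{\mathbf a}$ satisfies the density axiom, and $f^{\mathbf a}$ satisfies the size axiom if and only if $\gamma\le 1$.
   Context: Graphs are finite directed graphs; $d_G(x,y)$ is the shortest directed path length from $x$ to $y$ ($\infty$ if none). For $\mathbf a\in\mathbb{R}^{\mathbb{N}}$ the linear centrality is $f^{\mathbf a}_G(i)=\sum_{k\ge 0}|\{j: d_G(j,i)=k\}|\,a_k$ (only finite distances counted). For positive integers $k,p$: a $k$-clique has $k$ nodes with arcs in both directions between every pair of distinct nodes; a directed $p$-cycle has nodes $z_0,\dots,z_{p-1}$ with arcs $z_j\to z_{j+1\bmod p}$. Let $x$ be a clique node and $y$ a cycle node. $S$ is the disjoint union of the $k$-clique and the $p$-cycle; $S_{xy}$ is $S$ plus the arcs $x\to y$ and $y\to x$. Density axiom: for every $k\ge3$ and $p=k$, $f_{S_{xy}}(x)>f_{S_{xy}}(y)$. Size axiom: for every fixed $p$ there is $k_0$ with $f_S(x)>f_S(y)$ for all $k\ge k_0$, and for every fixed $k$ there is $p_0$ with $f_S(x)<f_S(y)$ for all $p\ge p_0$. *)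

theory Defs
  imports Complex_Main "HOL-Library.Extended_Nat"
begin

type_synonym 'v digraph = "'v set \<times> ('v \<times> 'v) set"

definition gdist :: "'v digraph \<Rightarrow> 'v \<Rightarrow> 'v \<Rightarrow> enat" where
  "gdist G x y = (if \<exists>n. (x, y) \<in> (snd G) ^^ n
                   then enat (LEAST n. (x, y) \<in> (snd G) ^^ n) else \<infinity>)"

definition lin_centrality :: "(nat \<Rightarrow> real) \<Rightarrow> 'v digraph \<Rightarrow> 'v \<Rightarrow> real" where
  "lin_centrality a G i = (\<Sum>k. real (card {j \<in> fst G. gdist G j i = enat k}) * a k)"

definition clique_nodes :: "nat \<Rightarrow> (nat + nat) set" where
  "clique_nodes k = Inl ` {..<k}"

definition cycle_nodes :: "nat \<Rightarrow> (nat + nat) set" where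
  "cycle_nodes p = Inr ` {..<p}"

definition clique_arcs :: "nat \<Rightarrow> ((nat + nat) \<times> (nat + nat)) set" where
  "clique_arcs k = {(Inl i, Inl j) | i j. i < k \<and> j < k \<and> i \<noteq> j}"

definition cycle_arcs :: "nat \<Rightarrow> ((nat + nat) \<times> (nat + nat)) set" where
  "cycle_arcs p = {(Inr j, Inr ((j + 1) mod p)) | j. j < p}"

definition graphS :: "nat \<Rightarrow> nat \<Rightarrow> (nat + nat) digraph" where
  "graphS k p = (clique_nodes k \<union> cycle_nodes p, clique_arcs k \<union> cycle_arcs p)"

definition graphSxy :: "nat \<Rightarrow> nat \<Rightarrow> (nat + nat) \<Rightarrow> (nat + nat) \<Rightarrow> (nat + nat) digraph" where
  "graphSxy k p x y = (fst (graphS k p), snd (graphS k p) \<union> {(x, y), (y, x)})"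

type_synonym centrality = "(nat + nat) digraph \<Rightarrow> (nat + nat) \<Rightarrow> real"

definition density_axiom :: "centrality \<Rightarrow> bool" where
  "density_axiom f \<longleftrightarrow>
     (\<forall>k::nat. k \<ge> 3 \<longrightarrow> (\<forall>x \<in> clique_nodes k. \<forall>y \<in> cycle_nodes k.
        f (graphSxy k k x y) x > f (graphSxy k k x y) y))"

definition size_axiom :: "centrality \<Rightarrow> bool" where
  "size_axiom f \<longleftrightarrow>
     (\<forall>p::nat. p > 0 \<longrightarrow> (\<exists>k0. \<forall>k \<ge> k0. \<forall>x \<in> clique_nodes k. \<forall>y \<in> cycle_nodes p.
        f (graphS k p) x > f (graphS k p) y)) \<and>
     (\<forall>k::nat. k > 0 \<longrightarrow> (\<exists>p0. \<forall>p \<ge> p0. \<forall>x \<in> clique_nodes k. \<forall>y \<in> cycle_nodes p.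
        f (graphS k p) x < f (graphS k p) y))"

definition powseq :: "real \<Rightarrow> nat \<Rightarrow> real" where
  "powseq \<gamma> i = (if i = 0 then 0 else real i powr (- \<gamma>))"

end

theory Submission
  imports Defs "HOL-Analysis.Analysis"
begin

lemma pot_le:
  fixes h :: "'v \<Rightarrow> enat"
  assumes t0: "h t = 0" and arc: "\<And>u w. (u,w) \<in> E \<Longrightarrow> h u \<le> h w + 1"
  shows "(u,t) \<in> E^^n \<Longrightarrow> h u \<le> enat n"
proof (induction n arbitrary: u)
  case 0 then show ?case using t0 by simp
next
  case (Suc n)
  then obtain w where w: "(u,w)\<in>E" "(w,t)\<in>E^^n" by (meson relpow_Suc_D2)
  then have "h u \<le> h w + 1" "h w \<le> enat n" using arc Suc by auto
  then have "h u \<le> enat n + 1" by (meson add_right_mono order_trans)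
  then show ?case by (simp add: one_enat_def)
qed

lemma pot_reach:
  fixes h :: "'v \<Rightarrow> enat"
  assumes z: "\<And>u. h u = 0 \<Longrightarrow> u = t"
    and st: "\<And>u d. h u = enat (Suc d) \<Longrightarrow> \<exists>w. (u,w)\<in>E \<and> h w = enat d"
  shows "h u = enat d \<Longrightarrow> (u,t) \<in> E^^d"
proof (induction d arbitrary: u)
  case 0 then show ?case using z by (simp add: zero_enat_def[symmetric])
next
  case (Suc d)
  then obtain w where "(u,w)\<in>E" "h w = enat d" using st by blast
  then show ?case using Suc by (meson relpow_Suc_I2)
qed

lemma gdist_pot:
  fixes h :: "'v \<Rightarrow> enat"
  assumes t0: "h t = 0" and arc: "\<And>u w. (u,w) \<in> E \<Longrightarrow> h u \<le> h w + 1"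
    and z: "\<And>u. h u = 0 \<Longrightarrow> u = t"
    and st: "\<And>u d. h u = enat (Suc d) \<Longrightarrow> \<exists>w. (u,w)\<in>E \<and> h w = enat d"
  shows "gdist (V,E) u t = h u"
proof (cases "h u")
  case (enat d)
  have r: "(u,t) \<in> E^^d" using pot_reach[OF z st] enat by blast
  have m: "\<And>n. (u,t)\<in>E^^n \<Longrightarrow> d \<le> n" using pot_le[of h t E, OF t0 arc] enat by fastforce
  have "(LEAST n. (u,t) \<in> E^^n) = d" by (rule Least_equality) (use r m in auto)
  then show ?thesis unfolding gdist_def using r enat by auto
next
  case infinity
  have "\<not> (u,t) \<in> E^^n" for n using pot_le[of h t E, OF t0 arc, of u n] infinity by auto
  then show ?thesis unfolding gdist_def using infinity by auto
qed

lemma cent_formula: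
  fixes h :: "'v \<Rightarrow> enat"
  assumes fin: "finite V" and g: "\<And>u. u\<in>V \<Longrightarrow> gdist (V,E) u t = h u"
  shows "lin_centrality a (V,E) t = (\<Sum>u\<in>V. case h u of enat d \<Rightarrow> a d | \<infinity> \<Rightarrow> 0)"
proof -
  define N where "N = Suc (\<Sum>u\<in>V. case h u of enat d \<Rightarrow> d | \<infinity> \<Rightarrow> 0)"
  have bound: "d < N" if "u\<in>V" "h u = enat d" for u d
  proof -
    have "(case h u of enat d \<Rightarrow> d | \<infinity> \<Rightarrow> 0) \<le> (\<Sum>u\<in>V. case h u of enat d \<Rightarrow> d | \<infinity> \<Rightarrow> 0)"
      by (rule member_le_sum) (use that fin in auto)
    then show ?thesis using that unfolding N_def by simp
  qed
  have C: "\<And>k. {j \<in> fst (V,E). gdist (V,E) j t = enat k} = {u\<in>V. h u = enat k}" using g by auto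
  have "lin_centrality a (V,E) t = (\<Sum>k. real (card {u\<in>V. h u = enat k}) * a k)"
    unfolding lin_centrality_def C ..
  also have "\<dots> = (\<Sum>k<N. real (card {u\<in>V. h u = enat k}) * a k)"
  proof (rule suminf_finite)
    show "finite {..<N}" by simp
    fix k assume "k \<notin> {..<N}"
    then have e: "{u\<in>V. h u = enat k} = {}" using bound by force
    show "real (card {u\<in>V. h u = enat k}) * a k = 0" by (subst e) simp
  qed
  also have "\<dots> = (\<Sum>k<N. \<Sum>u\<in>V. if h u = enat k then a k else 0)"
  proof (rule sum.cong)
    fix k
    have "real (card {u\<in>V. h u = enat k}) * a k = (\<Sum>u\<in>{u\<in>V. h u = enat k}. a k)" by simp
    also have "\<dots> = (\<Sum>u\<in>V. if h u = enat k then a k else 0)" by (rule sum.inter_filter[OF fin])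
    finally show "real (card {u\<in>V. h u = enat k}) * a k = (\<Sum>u\<in>V. if h u = enat k then a k else 0)" .
  qed simp
  also have "\<dots> = (\<Sum>u\<in>V. \<Sum>k<N. if h u = enat k then a k else 0)" by (rule sum.swap)
  also have "\<dots> = (\<Sum>u\<in>V. case h u of enat d \<Rightarrow> a d | \<infinity> \<Rightarrow> 0)"
  proof (rule sum.cong)
    fix u assume u: "u \<in> V"
    show "(\<Sum>k<N. if h u = enat k then a k else 0) = (case h u of enat d \<Rightarrow> a d | \<infinity> \<Rightarrow> 0)"
    proof (cases "h u")
      case (enat d)
      then show ?thesis using bound[OF u enat] by simp
    qed simp
  qed simp
  finally show ?thesis .
qed

lemma sum_V: "(\<Sum>u\<in> Inl`{..<k::nat} \<union> Inr`{..<p::nat}. F u) = (\<Sum>j<k. F (Inl j)) + (\<Sum>j<p. F (Inr j))"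
  by (subst sum.union_disjoint[OF finite_imageI finite_imageI]) (auto simp: sum.reindex inj_on_def)

definition gb :: "nat \<Rightarrow> nat \<Rightarrow> nat \<Rightarrow> nat" where
  "gb p b j = (if j \<le> b then b - j else b + p - j)"

lemma succ_mod: "j < p \<Longrightarrow> Suc j mod (p::nat) = (if Suc j = p then 0 else Suc j)"
  by auto

lemma gb_arc: "b < p \<Longrightarrow> j < p \<Longrightarrow> gb p b j \<le> gb p b ((j+1) mod p) + 1"
  by (cases "Suc j = p") (auto simp: succ_mod gb_def)

lemma gb_step: "b < p \<Longrightarrow> j < p \<Longrightarrow> gb p b j = Suc d \<Longrightarrow> gb p b ((j+1) mod p) = d"
  by (cases "Suc j = p") (auto simp: succ_mod gb_def split: if_splits)

lemma gb_zero: "b < p \<Longrightarrow> j < p \<Longrightarrow> gb p b j = 0 \<longleftrightarrow> j = b"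
  by (auto simp: gb_def)

lemma gb_lt: "b < p \<Longrightarrow> j < p \<Longrightarrow> gb p b j < p"
  by (auto simp: gb_def)

lemma sum_gb: "b < p \<Longrightarrow> (\<Sum>j<p. F (gb p b j)) = (\<Sum>d<p. F d)"
  by (rule sum.reindex_bij_witness[where i="gb p b" and j="gb p b"]) (auto simp: gb_def)

lemma cent_S_clique:
  assumes "a < k"
  shows "lin_centrality c (graphS k p) (Inl a) = (\<Sum>j<k. if j = a then c 0 else c 1)"
proof -
  define h :: "nat + nat \<Rightarrow> enat" where "h = (\<lambda>u. case u of Inl j \<Rightarrow> if j < k then (if j = a then enat 0 else enat 1) else \<infinity>
                               | Inr j \<Rightarrow> (\<infinity>::enat))"
  let ?E = "clique_arcs k \<union> cycle_arcs p"
  have g: "gdist (V, ?E) u (Inl a) = h u" for V u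
  proof (rule gdist_pot)
    show "h (Inl a) = 0" using assms by (simp add: h_def zero_enat_def)
    show "h u \<le> h w + 1" if "(u,w) \<in> ?E" for u w
      using that by (auto simp: h_def clique_arcs_def cycle_arcs_def one_enat_def)
    show "u = Inl a" if "h u = 0" for u
      using that by (auto simp: h_def zero_enat_def split: sum.splits if_splits)
    show "\<exists>w. (u,w)\<in>?E \<and> h w = enat d" if "h u = enat (Suc d)" for u d
      using that assms by (auto simp: h_def clique_arcs_def split: sum.splits if_splits)
  qed
  have "lin_centrality c (graphS k p) (Inl a) = (\<Sum>u\<in>Inl`{..<k} \<union> Inr`{..<p}. case h u of enat d \<Rightarrow> c d | \<infinity> \<Rightarrow> 0)"
    unfolding graphS_def clique_nodes_def cycle_nodes_def
    by (rule cent_formula) (use g in auto)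
  also have "\<dots> = (\<Sum>j<k. if j = a then c 0 else c 1)"
    by (auto simp: sum_V h_def intro!: sum.cong)
  finally show ?thesis .
qed

lemma cent_S_cycle:
  assumes "b < p"
  shows "lin_centrality c (graphS k p) (Inr b) = (\<Sum>d<p. c d)"
proof -
  define h :: "nat + nat \<Rightarrow> enat" where "h = (\<lambda>u. case u of Inr j \<Rightarrow> if j < p then enat (gb p b j) else \<infinity>
                               | Inl j \<Rightarrow> (\<infinity>::enat))"
  let ?E = "clique_arcs k \<union> cycle_arcs p"
  have g: "gdist (V, ?E) u (Inr b) = h u" for V u
  proof (rule gdist_pot)
    show "h (Inr b) = 0" using assms by (simp add: h_def zero_enat_def gb_def)
    show "h u \<le> h w + 1" if "(u,w) \<in> ?E" for u w
      using that assms gb_arc[OF assms] by (auto simp: h_def clique_arcs_def cycle_arcs_def one_enat_def)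
    show "u = Inr b" if "h u = 0" for u
      using that assms gb_zero[OF assms] by (auto simp: h_def zero_enat_def split: sum.splits if_splits)
    show "\<exists>w. (u,w)\<in>?E \<and> h w = enat d" if hu: "h u = enat (Suc d)" for u d
    proof -
      obtain j where j: "u = Inr j" "j < p" "gb p b j = Suc d" using hu by (cases u) (auto simp: h_def split: if_splits)
      show ?thesis
        by (rule exI[of _ "Inr ((j+1) mod p)"]) (use j assms gb_step[OF assms] in \<open>auto simp: h_def cycle_arcs_def\<close>)
    qed
  qed
  have "lin_centrality c (graphS k p) (Inr b) = (\<Sum>u\<in>Inl`{..<k} \<union> Inr`{..<p}. case h u of enat d \<Rightarrow> c d | \<infinity> \<Rightarrow> 0)"
    unfolding graphS_def clique_nodes_def cycle_nodes_def
    by (rule cent_formula) (use g in auto)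
  also have "\<dots> = (\<Sum>j<p. c (gb p b j))"
    by (simp add: sum_V h_def)
  also have "\<dots> = (\<Sum>d<p. c d)" by (rule sum_gb[OF assms])
  finally show ?thesis .
qed

lemma cent_Sxy_x:
  assumes a: "a < k" and b: "b < k"
  shows "lin_centrality c (graphSxy k k (Inl a) (Inr b)) (Inl a)
         = (\<Sum>j<k. if j = a then c 0 else c 1) + (\<Sum>d<k. c (Suc d))"
proof -
  define h :: "nat + nat \<Rightarrow> enat" where "h = (\<lambda>u. case u of Inl j \<Rightarrow> if j < k then (if j = a then enat 0 else enat 1) else \<infinity>
                               | Inr j \<Rightarrow> if j < k then enat (Suc (gb k b j)) else \<infinity>)"
  let ?E = "clique_arcs k \<union> cycle_arcs k \<union> {(Inl a, Inr b), (Inr b, Inl a)}"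
  have g: "gdist (V, ?E) u (Inl a) = h u" for V u
  proof (rule gdist_pot)
    show "h (Inl a) = 0" using a by (simp add: h_def zero_enat_def)
    show "h u \<le> h w + 1" if "(u,w) \<in> ?E" for u w
      using that a b gb_arc[OF b] gb_zero[OF b] by (auto simp: h_def clique_arcs_def cycle_arcs_def one_enat_def)
    show "u = Inl a" if "h u = 0" for u
      using that by (auto simp: h_def zero_enat_def split: sum.splits if_splits)
    show "\<exists>w. (u,w)\<in>?E \<and> h w = enat d" if hu: "h u = enat (Suc d)" for u d
    proof (cases u)
      case (Inl j)
      then have "j < k" "j \<noteq> a" "d = 0" using hu by (auto simp: h_def zero_enat_def split: if_splits)
      then show ?thesis
        by (intro exI[of _ "Inl a"]) (use Inl a in \<open>auto simp: h_def clique_arcs_def\<close>)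
    next
      case (Inr j)
      then have j: "j < k" "gb k b j = d" using hu by (auto simp: h_def split: if_splits)
      show ?thesis
      proof (cases d)
        case 0
        then have "j = b" using j gb_zero[OF b] by auto
        then show ?thesis
          by (intro exI[of _ "Inl a"]) (use Inr a 0 in \<open>auto simp: h_def\<close>)
      next
        case (Suc d')
        then show ?thesis
          by (intro exI[of _ "Inr (Suc j mod k)"]) (use Inr j b gb_step[OF b] in \<open>auto simp: h_def cycle_arcs_def\<close>)
      qed
    qed
  qed
  have "lin_centrality c (graphSxy k k (Inl a) (Inr b)) (Inl a) = (\<Sum>u\<in>Inl`{..<k} \<union> Inr`{..<k}. case h u of enat d \<Rightarrow> c d | \<infinity> \<Rightarrow> 0)"
    unfolding graphSxy_def graphS_def clique_nodes_def cycle_nodes_def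
    by simp (rule cent_formula, use g in auto)
  also have "\<dots> = (\<Sum>j<k. if j = a then c 0 else c 1) + (\<Sum>j<k. c (Suc (gb k b j)))"
    by (auto simp: sum_V h_def intro!: sum.cong)
  also have "(\<Sum>j<k. c (Suc (gb k b j))) = (\<Sum>d<k. c (Suc d))" by (rule sum_gb[OF b])
  finally show ?thesis .
qed

lemma cent_Sxy_y:
  assumes a: "a < k" and b: "b < k"
  shows "lin_centrality c (graphSxy k k (Inl a) (Inr b)) (Inr b)
         = (\<Sum>j<k. if j = a then c 1 else c 2) + (\<Sum>d<k. c d)"
proof -
  define h :: "nat + nat \<Rightarrow> enat" where "h = (\<lambda>u. case u of Inl j \<Rightarrow> if j < k then (if j = a then enat 1 else enat 2) else \<infinity>
                               | Inr j \<Rightarrow> if j < k then enat (gb k b j) else \<infinity>)"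
  let ?E = "clique_arcs k \<union> cycle_arcs k \<union> {(Inl a, Inr b), (Inr b, Inl a)}"
  have g: "gdist (V, ?E) u (Inr b) = h u" for V u
  proof (rule gdist_pot)
    show "h (Inr b) = 0" using b by (simp add: h_def zero_enat_def gb_def)
    show "h u \<le> h w + 1" if "(u,w) \<in> ?E" for u w
      using that a b gb_arc[OF b] gb_zero[OF b] by (auto simp: h_def clique_arcs_def cycle_arcs_def one_enat_def gb_def)
    show "u = Inr b" if "h u = 0" for u
      using that gb_zero[OF b] by (auto simp: h_def zero_enat_def split: sum.splits if_splits)
    show "\<exists>w. (u,w)\<in>?E \<and> h w = enat d" if hu: "h u = enat (Suc d)" for u d
    proof (cases u)
      case (Inl j)
      show ?thesis
      proof (cases "j = a")
        case True
        then have "d = 0" using hu Inl by (auto simp: h_def split: if_splits)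
        then show ?thesis
          by (intro exI[of _ "Inr b"]) (use Inl True b in \<open>auto simp: h_def gb_def\<close>)
      next
        case False
        then have "j < k" "d = 1" using hu Inl by (auto simp: h_def split: if_splits)
        then show ?thesis
          by (intro exI[of _ "Inl a"]) (use Inl False a in \<open>auto simp: h_def clique_arcs_def\<close>)
      qed
    next
      case (Inr j)
      then have j: "j < k" "gb k b j = Suc d" using hu by (auto simp: h_def split: if_splits)
      then show ?thesis
        by (intro exI[of _ "Inr (Suc j mod k)"]) (use Inr j b gb_step[OF b] in \<open>auto simp: h_def cycle_arcs_def\<close>)
    qed
  qed
  have "lin_centrality c (graphSxy k k (Inl a) (Inr b)) (Inr b) = (\<Sum>u\<in>Inl`{..<k} \<union> Inr`{..<k}. case h u of enat d \<Rightarrow> c d | \<infinity> \<Rightarrow> 0)"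
    unfolding graphSxy_def graphS_def clique_nodes_def cycle_nodes_def
    by simp (rule cent_formula, use g in auto)
  also have "\<dots> = (\<Sum>j<k. if j = a then c 1 else c 2) + (\<Sum>j<k. c (gb k b j))"
    by (auto simp: sum_V h_def intro!: sum.cong)
  also have "(\<Sum>j<k. c (gb k b j)) = (\<Sum>d<k. c d)" by (rule sum_gb[OF b])
  finally show ?thesis .
qed

lemma powseq_eq: "powseq g = (\<lambda>n. real n powr (-g))"
  by (auto simp: powseq_def fun_eq_iff)

lemma powseq_nonneg: "0 \<le> powseq g n"
  by (simp add: powseq_def)

lemma sum_if_one: "(a::nat) < k \<Longrightarrow> (\<Sum>j<k. if j = a then u else v) = u + (real k - 1) * (v::real)"
proof -
  assume a: "a < k"
  have "(\<Sum>j<k. if j = a then u else v) = (\<Sum>j<k. v + (if j = a then u - v else 0))"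
    by (rule sum.cong) auto
  also have "\<dots> = real k * v + (u - v)" using a by (simp add: sum.distrib)
  finally show ?thesis by (simp add: algebra_simps)
qed

lemma two_pow: "3 \<le> k \<Longrightarrow> real k < 2 ^ (k - 1)"
proof (induction k rule: dec_induct)
  case base then show ?case by simp
next
  case (step n)
  then have "real (Suc n) < 2 ^ (n - 1) + 2 ^ (n - 1)"
    by (smt (verit) of_nat_Suc one_le_power)
  also have "\<dots> = 2 ^ (Suc n - 1)" using step(1) by (cases n) auto
  finally show ?case .
qed

lemma key_ineq:
  fixes g :: real
  assumes g: "g > 0" and k: "3 \<le> k"
  shows "1 < (real k - 1) * (1 - 2 powr (-g)) + real k powr (-g)"
proof -
  define u where "u = 2 powr (-g)"
  have u0: "0 < u" by (simp add: u_def)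
  have "(2::real) ^ (k - 1) > real k" using two_pow[OF k] .
  then have "(2 ^ (k - 1)) powr (-g) < real k powr (-g)"
    using g k by (intro powr_less_mono2_neg) auto
  also have "(2 ^ (k - 1)) powr (-g) = u ^ (k - 1)"
    unfolding u_def by (simp add: powr_realpow[symmetric] powr_powr mult.commute)
  finally have A: "u ^ (k - 1) < real k powr (-g)" .
  have B: "1 + real (k - 1) * (u - 1) \<le> (1 + (u - 1)) ^ (k - 1)"
    by (rule Bernoulli_inequality) (use u0 in simp)
  have "real (k - 1) = real k - 1" using k by simp
  then show ?thesis using A B unfolding u_def[symmetric] by (simp add: algebra_simps)
qed

lemma fS_clique: "a < k \<Longrightarrow> lin_centrality (powseq g) (graphS k p) (Inl a) = real k - 1"
  by (simp add: cent_S_clique sum_if_one powseq_def)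

lemma fS_cycle: "b < p \<Longrightarrow> lin_centrality (powseq g) (graphS k p) (Inr b) = (\<Sum>d<p. powseq g d)"
  by (simp add: cent_S_cycle)

theorem corollary1:
  fixes \<gamma> :: real
  assumes "\<gamma> > 0"
  shows "density_axiom (lin_centrality (powseq \<gamma>)) \<and>
         (size_axiom (lin_centrality (powseq \<gamma>)) \<longleftrightarrow> \<gamma> \<le> 1)"
proof -
  let ?P = "powseq \<gamma>"
  let ?H = "\<lambda>n. \<Sum>d<n. ?P d"
  have mono: "?H m \<le> ?H n" if "m \<le> n" for m n
    by (rule sum_mono2) (use that powseq_nonneg in auto)
  have dens: "density_axiom (lin_centrality ?P)"
    unfolding density_axiom_def
  proof (intro allI impI ballI)
    fix k x y assume k: "3 \<le> k" and x: "x \<in> clique_nodes k" and y: "y \<in> cycle_nodes k"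
    obtain a where a: "x = Inl a" "a < k" using x by (auto simp: clique_nodes_def)
    obtain b where b: "y = Inr b" "b < k" using y by (auto simp: cycle_nodes_def)
    have fx: "lin_centrality ?P (graphSxy k k x y) x = (real k - 1) + (\<Sum>d<k. ?P (Suc d))"
      using a b by (simp add: cent_Sxy_x sum_if_one powseq_def)
    have fy: "lin_centrality ?P (graphSxy k k x y) y = 1 + (real k - 1) * 2 powr (-\<gamma>) + (\<Sum>d<k. ?P d)"
      using a b by (simp add: cent_Sxy_y sum_if_one powseq_def)
    have tel: "(\<Sum>d<k. ?P (Suc d)) - (\<Sum>d<k. ?P d) = ?P k"
      using sum_lessThan_telescope[of ?P k] by (simp add: sum_subtractf powseq_def)
    have "?P k = real k powr (-\<gamma>)" using k by (simp add: powseq_def)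
    then show "lin_centrality ?P (graphSxy k k x y) y < lin_centrality ?P (graphSxy k k x y) x"
      using fx fy tel key_ineq[OF assms k] by (simp add: algebra_simps)
  qed
  have partA: "\<forall>p::nat. p > 0 \<longrightarrow> (\<exists>k0. \<forall>k \<ge> k0. \<forall>x \<in> clique_nodes k. \<forall>y \<in> cycle_nodes p.
        lin_centrality ?P (graphS k p) x > lin_centrality ?P (graphS k p) y)"
  proof (intro allI impI)
    fix p :: nat assume "p > 0"
    show "\<exists>k0. \<forall>k \<ge> k0. \<forall>x \<in> clique_nodes k. \<forall>y \<in> cycle_nodes p.
        lin_centrality ?P (graphS k p) x > lin_centrality ?P (graphS k p) y"
    proof (intro exI[of _ "nat \<lceil>?H p\<rceil> + 2"] allI impI ballI)
      fix k x y assume k: "nat \<lceil>?H p\<rceil> + 2 \<le> k" and x: "x \<in> clique_nodes k" and y: "y \<in> cycle_nodes p"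
      obtain a where a: "x = Inl a" "a < k" using x by (auto simp: clique_nodes_def)
      obtain b where b: "y = Inr b" "b < p" using y by (auto simp: cycle_nodes_def)
      have "?H p \<le> real (nat \<lceil>?H p\<rceil>)" by linarith
      also have "\<dots> < real k - 1" using k by linarith
      finally show "lin_centrality ?P (graphS k p) x > lin_centrality ?P (graphS k p) y"
        using a b by (simp add: fS_clique fS_cycle)
    qed
  qed
  have size_iff: "size_axiom (lin_centrality ?P) \<longleftrightarrow> \<gamma> \<le> 1"
  proof
    assume sa: "size_axiom (lin_centrality ?P)"
    show "\<gamma> \<le> 1"
    proof (rule ccontr)
      assume "\<not> \<gamma> \<le> 1"
      then have sm: "summable ?P" unfolding powseq_eq by (subst summable_real_powr_iff) auto
      define L where "L = suminf ?P"
      have HL: "?H n \<le> L" for n unfolding L_def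
        by (rule sum_le_suminf[OF sm]) (auto simp: powseq_nonneg)
      define k where "k = nat \<lceil>L\<rceil> + 1"
      have "k > 0" by (simp add: k_def)
      then obtain p0 where p0: "\<forall>p \<ge> p0. \<forall>x \<in> clique_nodes k. \<forall>y \<in> cycle_nodes p.
        lin_centrality ?P (graphS k p) x < lin_centrality ?P (graphS k p) y"
        using sa unfolding size_axiom_def by blast
      have "Inl 0 \<in> clique_nodes k" using \<open>k > 0\<close> by (simp add: clique_nodes_def)
      moreover have "Inr 0 \<in> cycle_nodes (Suc p0)" by (simp add: cycle_nodes_def)
      ultimately have "lin_centrality ?P (graphS k (Suc p0)) (Inl 0) < lin_centrality ?P (graphS k (Suc p0)) (Inr 0)"
        using p0[rule_format, of "Suc p0"] by auto
      then have "real k - 1 < ?H (Suc p0)" using \<open>k > 0\<close> by (simp add: fS_clique fS_cycle)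
      moreover have "real k - 1 \<ge> L" unfolding k_def using HL[of 0] by linarith
      ultimately show False using HL[of "Suc p0"] by linarith
    qed
  next
    assume g1: "\<gamma> \<le> 1"
    have nsm: "\<not> summable ?P" unfolding powseq_eq by (subst summable_real_powr_iff) (use g1 in auto)
    have unb: "\<exists>n. ?H n > B" for B
    proof (rule ccontr)
      assume "\<not> (\<exists>n. ?H n > B)"
      then have "\<And>n. ?H n \<le> B" by (meson not_le)
      then have "summable ?P" by (intro summableI_nonneg_bounded[of _ B]) (auto simp: powseq_nonneg)
      then show False using nsm by blast
    qed
    have partB: "\<forall>k::nat. k > 0 \<longrightarrow> (\<exists>p0. \<forall>p \<ge> p0. \<forall>x \<in> clique_nodes k. \<forall>y \<in> cycle_nodes p.
        lin_centrality ?P (graphS k p) x < lin_centrality ?P (graphS k p) y)"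
    proof (intro allI impI)
      fix k :: nat assume "k > 0"
      obtain n where n: "?H n > real k - 1" using unb by blast
      show "\<exists>p0. \<forall>p \<ge> p0. \<forall>x \<in> clique_nodes k. \<forall>y \<in> cycle_nodes p.
        lin_centrality ?P (graphS k p) x < lin_centrality ?P (graphS k p) y"
      proof (intro exI[of _ n] allI impI ballI)
        fix p x y assume p: "n \<le> p" and x: "x \<in> clique_nodes k" and y: "y \<in> cycle_nodes p"
        obtain a where a: "x = Inl a" "a < k" using x by (auto simp: clique_nodes_def)
        obtain b where b: "y = Inr b" "b < p" using y by (auto simp: cycle_nodes_def)
        have "real k - 1 < ?H p" using n mono[OF p] by linarith
        then show "lin_centrality ?P (graphS k p) x < lin_centrality ?P (graphS k p) y"
          using a b by (simp add: fS_clique fS_cycle)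
      qed
    qed
    show "size_axiom (lin_centrality ?P)"
      unfolding size_axiom_def using partA partB by blast
  qed
  show ?thesis using dens size_iff by blast
qed

end
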